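(* Let $n\ge k\ge d$ be positive integers. Let $\mathcal{Z}_{n,k,d}\subseteq\mathbb{Q}^{n+d+k}$ be the set of points $(z_1,\dots,z_n;z_{n+1},\dots,z_{n+d};z_{n+d+1},\dots,z_{n+d+k})$ for which there exist an injective function $f:\{n+1,\dots,n+d\}\hookrightarrow\{n+d+1,\dots,n+d+k\}$ with $z_i=z_{f(i)}$ for all $n+1\le i\le n+d$, and a surjective function $g:\{1,\dots,n\}\twoheadrightarrow\{n+1,\dots,n+d\}$ with $z_j=z_{g(j)}$ for all $1\le j\le n$. Let $J^{\mathbb{Q},\mathbf{t}}_{n,k,d}\subseteq\mathbb{Q}[\mathbf{x}_n,\mathbf{y}_d,\mathbf{t}_k]$ be the ideal generated by \begin{itemize} \item $e_r(\mathbf{t}_k) - e_{r-1}(\mathbf{t}_k)h_1(\mathbf{y}_d)+\cdots+(-1)^r h_r(\mathbf{y}_d)$ for all $r>k-d$, \item $e_r(\mathbf{x}_n) - e_{r-1}(\mathbf{x}_n)h_1(\mathbf{y}_d)+\cdots+(-1)^r h_r(\mathbf{y}_d)$ for all $r>n-d$, \item $x_i^d - x_i^{d-1}e_1(\mathbf{y}_d)+\cdots+(-1)^d e_d(\mathbf{y}_d)$ for $i=1,\dots,n$. \end{itemize} Then $J^{\mathbb{Q},\mathbf{t}}_{n,k,d}\subseteq\mathbf{I}(\mathcal{Z}_{n,k,d})$.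
   Context: $\mathbb{Q}[\mathbf{x}_n,\mathbf{y}_d,\mathbf{t}_k]$, with $\mathbf{x}_n=(x_1,\dots,x_n)$, $\mathbf{y}_d=(y_1,\dots,y_d)$, $\mathbf{t}_k=(t_1,\dots,t_k)$, is the coordinate ring of $\mathbb{Q}^{n+d+k}$ (the coordinates in that order), and $\mathbf{I}(\mathcal{Z})$ denotes the ideal of polynomials vanishing on $\mathcal{Z}$. $e_r,h_r$ are elementary and complete homogeneous symmetric polynomials ($e_0=h_0=1$, $e_r=0$ when $r$ exceeds the number of variables). *)

theory Defs
  imports Complex_Main "HOL-Library.Poly_Mapping"
begin

text \<open>Coordinate/variable number
  i (1-based, as in the paper) is the variable with index i - 1.\<close>

type_synonym mpoly = "(nat \<Rightarrow>\<^sub>0 nat) \<Rightarrow>\<^sub>0 rat"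

definition mpoly_var :: "nat \<Rightarrow> mpoly" where
  "mpoly_var v = Poly_Mapping.single (Poly_Mapping.single v 1) 1"

definition mpoly_ring :: "nat \<Rightarrow> mpoly set" where
  "mpoly_ring N = {p. \<forall>m\<in>Poly_Mapping.keys p. Poly_Mapping.keys m \<subseteq> {..<N}}"

definition mpoly_eval :: "(nat \<Rightarrow> rat) \<Rightarrow> mpoly \<Rightarrow> rat" where
  "mpoly_eval z p = (\<Sum>m\<in>Poly_Mapping.keys p. Poly_Mapping.lookup p m * (\<Prod>v\<in>Poly_Mapping.keys m. z v ^ Poly_Mapping.lookup m v))"

text \<open>Points of Q^N, as functions vanishing outside the first N indices.\<close>
definition points :: "nat \<Rightarrow> (nat \<Rightarrow> rat) set" where
  "points N = {z. \<forall>v\<ge>N. z v = 0}"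

definition vanishing_ideal :: "nat \<Rightarrow> (nat \<Rightarrow> rat) set \<Rightarrow> mpoly set" where
  "vanishing_ideal N Z = {p \<in> mpoly_ring N. \<forall>z\<in>Z. mpoly_eval z p = 0}"

definition is_ideal_in :: "'a::comm_ring_1 set \<Rightarrow> 'a set \<Rightarrow> bool" where
  "is_ideal_in R I \<longleftrightarrow> I \<subseteq> R \<and> 0 \<in> I \<and> (\<forall>a\<in>I. \<forall>b\<in>I. a + b \<in> I)
     \<and> (\<forall>r\<in>R. \<forall>a\<in>I. r * a \<in> I)"

definition ideal_gen_in :: "'a::comm_ring_1 set \<Rightarrow> 'a set \<Rightarrow> 'a set" where
  "ideal_gen_in R S = \<Inter>{I. is_ideal_in R I \<and> S \<subseteq> I}"

definition esym :: "nat \<Rightarrow> nat set \<Rightarrow> mpoly" where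
  "esym r V = (\<Sum>S\<in>{S. S \<subseteq> V \<and> card S = r}. \<Prod>v\<in>S. mpoly_var v)"

definition hsym :: "nat \<Rightarrow> nat set \<Rightarrow> mpoly" where
  "hsym r V = (\<Sum>m\<in>{m. Poly_Mapping.keys m \<subseteq> V \<and> sum (Poly_Mapping.lookup m) V = r}. Poly_Mapping.single m 1)"

text \<open>Variable index sets: x_i has index i-1, y_j index n+j-1, t_l index n+d+l-1.\<close>
definition xvars :: "nat \<Rightarrow> nat set" where "xvars n = {..<n}"
definition yvars :: "nat \<Rightarrow> nat \<Rightarrow> nat set" where "yvars n d = {n..<n+d}"
definition tvars :: "nat \<Rightarrow> nat \<Rightarrow> nat \<Rightarrow> nat set" where "tvars n d k = {n+d..<n+d+k}"

text \<open>The set Z_{n,k,d}, with coordinates z_1..z_{n+d+k} (1-based), z_i = z (i - 1).\<close>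
definition Zset :: "nat \<Rightarrow> nat \<Rightarrow> nat \<Rightarrow> (nat \<Rightarrow> rat) set" where
  "Zset n k d = {z \<in> points (n+d+k).
     (\<exists>f. (\<forall>i\<in>{n+1..n+d}. f i \<in> {n+d+1..n+d+k}) \<and> inj_on f {n+1..n+d} \<and>
          (\<forall>i\<in>{n+1..n+d}. z (i - 1) = z (f i - 1))) \<and>
     (\<exists>g. (\<forall>j\<in>{1..n}. g j \<in> {n+1..n+d}) \<and> g ` {1..n} = {n+1..n+d} \<and>
          (\<forall>j\<in>{1..n}. z (j - 1) = z (g j - 1)))}"

definition Jgens :: "nat \<Rightarrow> nat \<Rightarrow> nat \<Rightarrow> mpoly set" where
  "Jgens n k d =
     {(\<Sum>i=0..r. (-1)^i * esym (r - i) (tvars n d k) * hsym i (yvars n d)) | r. r > k - d}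
   \<union> {(\<Sum>i=0..r. (-1)^i * esym (r - i) (xvars n) * hsym i (yvars n d)) | r. r > n - d}
   \<union> {(\<Sum>j=0..d. (-1)^j * mpoly_var (i - 1) ^ (d - j) * esym j (yvars n d)) | i. i \<in> {1..n}}"

definition Jideal :: "nat \<Rightarrow> nat \<Rightarrow> nat \<Rightarrow> mpoly set" where
  "Jideal n k d = ideal_gen_in (mpoly_ring (n+d+k)) (Jgens n k d)"

end

theory Submission
  imports Defs "HOL-Computational_Algebra.Formal_Power_Series"
begin


definition mon :: "(nat \<Rightarrow> rat) \<Rightarrow> (nat \<Rightarrow>\<^sub>0 nat) \<Rightarrow> rat" where
  "mon z m = (\<Prod>v\<in>Poly_Mapping.keys m. z v ^ Poly_Mapping.lookup m v)"

lemma mon_superset: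
  assumes "finite S" "Poly_Mapping.keys m \<subseteq> S"
  shows "mon z m = (\<Prod>v\<in>S. z v ^ Poly_Mapping.lookup m v)"
  unfolding mon_def
  by (rule prod.mono_neutral_left) (use assms in \<open>auto simp: in_keys_iff\<close>)

lemma mon_add: "mon z (m + m') = mon z m * mon z m'"
proof -
  let ?S = "Poly_Mapping.keys m \<union> Poly_Mapping.keys m'"
  have f: "finite ?S" by simp
  have "mon z (m + m') = (\<Prod>v\<in>?S. z v ^ Poly_Mapping.lookup (m+m') v)"
    by (rule mon_superset[OF f keys_add])
  also have "\<dots> = (\<Prod>v\<in>?S. z v ^ Poly_Mapping.lookup m v) * (\<Prod>v\<in>?S. z v ^ Poly_Mapping.lookup m' v)"
    by (simp add: lookup_add power_add prod.distrib)
  also have "\<dots> = mon z m * mon z m'"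
    using mon_superset[OF f, of m z] mon_superset[OF f, of m' z] by auto
  finally show ?thesis .
qed

lemma mon_zero [simp]: "mon z 0 = 1" by (simp add: mon_def)

lemma mon_single [simp]: "mon z (Poly_Mapping.single v i) = z v ^ i"
  by (simp add: mon_def)

lemma eval_superset:
  assumes "finite S" "Poly_Mapping.keys p \<subseteq> S"
  shows "mpoly_eval z p = (\<Sum>m\<in>S. Poly_Mapping.lookup p m * mon z m)"
  unfolding mpoly_eval_def mon_def[symmetric]
  by (rule sum.mono_neutral_left) (use assms in \<open>auto simp: in_keys_iff\<close>)

lemma eval_add: "mpoly_eval z (p + q) = mpoly_eval z p + mpoly_eval z q"
proof -
  let ?S = "Poly_Mapping.keys p \<union> Poly_Mapping.keys q"
  have f: "finite ?S" by simp
  show ?thesis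
    using eval_superset[OF f keys_add[of p q]] eval_superset[OF f, of p z] eval_superset[OF f, of q z]
    by (simp add: lookup_add distrib_right sum.distrib)
qed

lemma eval_zero [simp]: "mpoly_eval z 0 = 0" by (simp add: mpoly_eval_def)

lemma eval_single: "mpoly_eval z (Poly_Mapping.single m c) = c * mon z m"
  by (simp add: mpoly_eval_def mon_def)

lemma eval_sum: "mpoly_eval z (sum f A) = (\<Sum>a\<in>A. mpoly_eval z (f a))"
  by (induction A rule: infinite_finite_induct) (auto simp: eval_add)

lemma p_as_sum: "(p::mpoly) = (\<Sum>m\<in>Poly_Mapping.keys p. Poly_Mapping.single m (Poly_Mapping.lookup p m))"
proof (rule poly_mapping_eqI)
  fix k
  show "Poly_Mapping.lookup p k = Poly_Mapping.lookup (\<Sum>m\<in>Poly_Mapping.keys p. Poly_Mapping.single m (Poly_Mapping.lookup p m)) k"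
    by (simp add: lookup_sum lookup_single when_def in_keys_iff)
qed

lemma eval_mult: "mpoly_eval z (p * q) = mpoly_eval z p * mpoly_eval z q"
proof -
  have "p * q = (\<Sum>m\<in>Poly_Mapping.keys p. Poly_Mapping.single m (Poly_Mapping.lookup p m)) *
     (\<Sum>m'\<in>Poly_Mapping.keys q. Poly_Mapping.single m' (Poly_Mapping.lookup q m'))"
    using p_as_sum[of p] p_as_sum[of q] by simp
  also have "\<dots> = (\<Sum>m\<in>Poly_Mapping.keys p. \<Sum>m'\<in>Poly_Mapping.keys q.
       Poly_Mapping.single (m + m') (Poly_Mapping.lookup p m * Poly_Mapping.lookup q m'))"
    by (simp add: sum_distrib_left sum_distrib_right mult_single sum.swap[of _ "Poly_Mapping.keys q"])
  finally have "mpoly_eval z (p * q) = (\<Sum>m\<in>Poly_Mapping.keys p. \<Sum>m'\<in>Poly_Mapping.keys q.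
       (Poly_Mapping.lookup p m * mon z m) * (Poly_Mapping.lookup q m' * mon z m'))"
    by (simp add: eval_sum eval_single mon_add mult_ac)
  also have "\<dots> = mpoly_eval z p * mpoly_eval z q"
    by (simp add: mpoly_eval_def mon_def sum_product)
  finally show ?thesis .
qed

lemma eval_one [simp]: "mpoly_eval z 1 = 1"
  by (simp add: mpoly_eval_def)

lemma eval_uminus: "mpoly_eval z (- p) = - mpoly_eval z p"
  by (simp add: mpoly_eval_def sum_negf)

lemma eval_power: "mpoly_eval z (p ^ i) = mpoly_eval z p ^ i"
  by (induction i) (auto simp: eval_mult)

lemma eval_prod: "mpoly_eval z (prod f A) = (\<Prod>a\<in>A. mpoly_eval z (f a))"
  by (induction A rule: infinite_finite_induct) (auto simp: eval_mult)

lemma eval_var [simp]: "mpoly_eval z (mpoly_var v) = z v"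
  by (simp add: mpoly_var_def eval_single)

lemma eval_neg1_pow: "mpoly_eval z ((-1) ^ i) = (-1) ^ i"
  by (simp only: eval_power eval_uminus eval_one)

lemma ring_add: "p \<in> mpoly_ring N \<Longrightarrow> q \<in> mpoly_ring N \<Longrightarrow> p + q \<in> mpoly_ring N"
proof -
  assume p: "p \<in> mpoly_ring N" and q: "q \<in> mpoly_ring N"
  have "Poly_Mapping.keys m \<subseteq> {..<N}" if m: "m \<in> Poly_Mapping.keys (p + q)" for m
  proof -
    have "m \<in> Poly_Mapping.keys p \<or> m \<in> Poly_Mapping.keys q" using m keys_add[of p q] by blast
    then show ?thesis using p q unfolding mpoly_ring_def by blast
  qed
  then show ?thesis unfolding mpoly_ring_def by blast
qed

lemma ring_mult: "p \<in> mpoly_ring N \<Longrightarrow> q \<in> mpoly_ring N \<Longrightarrow> p * q \<in> mpoly_ring N"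
proof -
  assume p: "p \<in> mpoly_ring N" and q: "q \<in> mpoly_ring N"
  have "Poly_Mapping.keys m \<subseteq> {..<N}" if m: "m \<in> Poly_Mapping.keys (p * q)" for m
  proof -
    obtain a b where "m = a + b" "a \<in> Poly_Mapping.keys p" "b \<in> Poly_Mapping.keys q"
      using keys_mult m by blast
    then show ?thesis using p q keys_add[of a b] unfolding mpoly_ring_def by blast
  qed
  then show ?thesis unfolding mpoly_ring_def by blast
qed

lemma ring_uminus: "p \<in> mpoly_ring N \<Longrightarrow> - p \<in> mpoly_ring N"
  unfolding mpoly_ring_def by simp

lemma ring_one: "1 \<in> mpoly_ring N"
  unfolding mpoly_ring_def by simp

lemma ring_zero: "0 \<in> mpoly_ring N"
  unfolding mpoly_ring_def by simp

lemma ring_sum: "(\<And>a. a \<in> A \<Longrightarrow> f a \<in> mpoly_ring N) \<Longrightarrow> sum f A \<in> mpoly_ring N"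
  by (induction A rule: infinite_finite_induct) (auto intro: ring_add ring_zero)

lemma ring_prod: "(\<And>a. a \<in> A \<Longrightarrow> f a \<in> mpoly_ring N) \<Longrightarrow> prod f A \<in> mpoly_ring N"
  by (induction A rule: infinite_finite_induct) (auto intro: ring_mult ring_one)

lemma ring_power: "p \<in> mpoly_ring N \<Longrightarrow> p ^ i \<in> mpoly_ring N"
  by (induction i) (auto intro: ring_mult ring_one)

lemma ring_single: "Poly_Mapping.keys m \<subseteq> {..<N} \<Longrightarrow> Poly_Mapping.single m c \<in> mpoly_ring N"
  unfolding mpoly_ring_def by simp

lemma ring_var: "v < N \<Longrightarrow> mpoly_var v \<in> mpoly_ring N"
  unfolding mpoly_var_def by (rule ring_single) simp

lemma ring_neg1_pow: "(-1) ^ i \<in> mpoly_ring N"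
  by (intro ring_power ring_uminus ring_one)



definition es :: "(nat \<Rightarrow> rat) \<Rightarrow> nat set \<Rightarrow> nat \<Rightarrow> rat" where
  "es z T r = (\<Sum>S\<in>{S. S \<subseteq> T \<and> card S = r}. \<Prod>v\<in>S. z v)"

definition Ms :: "nat set \<Rightarrow> nat \<Rightarrow> (nat \<Rightarrow>\<^sub>0 nat) set" where
  "Ms Y i = {m. Poly_Mapping.keys m \<subseteq> Y \<and> sum (Poly_Mapping.lookup m) Y = i}"

definition hs :: "(nat \<Rightarrow> rat) \<Rightarrow> nat set \<Rightarrow> nat \<Rightarrow> rat" where
  "hs z Y i = (\<Sum>m\<in>Ms Y i. mon z m)"

lemma eval_esym: "mpoly_eval z (esym r V) = es z V r"
  by (simp add: esym_def es_def eval_sum eval_prod)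

lemma eval_hsym: "mpoly_eval z (hsym r V) = hs z V r"
  by (simp add: hsym_def hs_def Ms_def eval_sum eval_single)

lemma es_gt:
  assumes "finite T" "card T < r"
  shows "es z T r = 0"
proof -
  have "{S. S \<subseteq> T \<and> card S = r} = {}"
  proof (rule equals0I)
    fix S assume "S \<in> {S. S \<subseteq> T \<and> card S = r}"
    then have "S \<subseteq> T" "card S = r" by auto
    have "card S \<le> card T" by (rule card_mono[OF assms(1) \<open>S \<subseteq> T\<close>])
    then show False using assms(2) \<open>card S = r\<close> by simp
  qed
  then show ?thesis unfolding es_def by (simp only: sum.empty)
qed

lemma es_0: "finite T \<Longrightarrow> es z T 0 = 1"
proof -
  assume "finite T"
  then have "{S. S \<subseteq> T \<and> card S = 0} = {{}}"
    by (auto dest: finite_subset)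
  then show ?thesis unfolding es_def by simp
qed

lemma es_insert:
  assumes fin: "finite T" and t: "t \<notin> T"
  shows "es z (insert t T) (Suc s) = es z T (Suc s) + z t * es z T s"
proof -
  let ?P = "\<lambda>k. {S. S \<subseteq> T \<and> card S = k}"
  let ?Q = "{S. S \<subseteq> insert t T \<and> card S = Suc s}"
  have split: "?Q = ?P (Suc s) \<union> insert t ` ?P s"
  proof (rule set_eqI, rule iffI)
    fix S assume S: "S \<in> ?Q"
    then have finS: "finite S" using fin finite_subset by auto
    show "S \<in> ?P (Suc s) \<union> insert t ` ?P s"
    proof (cases "t \<in> S")
      case True
      then have "S = insert t (S - {t})" "S - {t} \<in> ?P s"
        using S finS by (auto simp: card_Diff_singleton)
      then show ?thesis by blast
    next
      case False
      then show ?thesis using S by auto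
    qed
  next
    fix S assume "S \<in> ?P (Suc s) \<union> insert t ` ?P s"
    then show "S \<in> ?Q"
    proof
      assume "S \<in> ?P (Suc s)" then show ?thesis by auto
    next
      assume "S \<in> insert t ` ?P s"
      then obtain S' where "S = insert t S'" "S' \<subseteq> T" "card S' = s" by auto
      moreover have "finite S'" "t \<notin> S'" using \<open>S' \<subseteq> T\<close> fin t finite_subset by auto
      ultimately show ?thesis by auto
    qed
  qed
  have disj: "?P (Suc s) \<inter> insert t ` ?P s = {}" using t by auto
  have inj: "inj_on (insert t) (?P s)"
  proof (rule inj_onI)
    fix A B assume "A \<in> ?P s" "B \<in> ?P s" "insert t A = insert t B"
    moreover have "t \<notin> A" "t \<notin> B" using \<open>A \<in> ?P s\<close> \<open>B \<in> ?P s\<close> t by auto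
    ultimately show "A = B" using insert_ident by metis
  qed
  have finP: "finite (?P k)" for k using fin by auto
  have "es z (insert t T) (Suc s) = (\<Sum>S\<in>?P (Suc s). \<Prod>v\<in>S. z v) + (\<Sum>S\<in>insert t ` ?P s. \<Prod>v\<in>S. z v)"
    unfolding es_def split by (rule sum.union_disjoint) (use finP disj in auto)
  also have "(\<Sum>S\<in>insert t ` ?P s. \<Prod>v\<in>S. z v) = (\<Sum>S\<in>?P s. \<Prod>v\<in>insert t S. z v)"
    by (rule sum.reindex[OF inj, unfolded comp_def])
  also have "\<dots> = (\<Sum>S\<in>?P s. z t * (\<Prod>v\<in>S. z v))"
  proof (rule sum.cong[OF refl])
    fix S assume "S \<in> ?P s"
    then have "finite S" "t \<notin> S" using fin t finite_subset by auto
    then show "(\<Prod>v\<in>insert t S. z v) = z t * (\<Prod>v\<in>S. z v)" by simp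
  qed
  finally show ?thesis by (simp only: es_def sum_distrib_left)
qed

lemma Ms_finite:
  assumes "finite Y"
  shows "finite (Ms Y i)"
proof -
  let ?phi = "\<lambda>m. restrict (Poly_Mapping.lookup m) Y"
  have inj: "inj_on ?phi (Ms Y i)"
  proof (rule inj_onI)
    fix m m' assume m: "m \<in> Ms Y i" and m': "m' \<in> Ms Y i" and eq: "?phi m = ?phi m'"
    show "m = m'"
    proof (rule poly_mapping_eqI)
      fix v show "Poly_Mapping.lookup m v = Poly_Mapping.lookup m' v"
      proof (cases "v \<in> Y")
        case True then show ?thesis using fun_cong[OF eq, of v] by simp
      next
        case False
        then have "v \<notin> Poly_Mapping.keys m" "v \<notin> Poly_Mapping.keys m'" using m m' by (auto simp: Ms_def)
        then show ?thesis by (simp add: in_keys_iff)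
      qed
    qed
  qed
  have "?phi ` Ms Y i \<subseteq> PiE Y (\<lambda>_. {..i})"
  proof
    fix f assume "f \<in> ?phi ` Ms Y i"
    then obtain m where m: "m \<in> Ms Y i" and f: "f = ?phi m" by auto
    have si: "sum (Poly_Mapping.lookup m) Y = i" using m by (simp add: Ms_def)
    have "Poly_Mapping.lookup m v \<le> i" if "v \<in> Y" for v
    proof -
      have "Poly_Mapping.lookup m v \<le> sum (Poly_Mapping.lookup m) Y"
        by (rule member_le_sum) (use that assms in simp_all)
      then show ?thesis using si by simp
    qed
    then show "f \<in> PiE Y (\<lambda>_. {..i})" unfolding f by (simp add: PiE_iff)
  qed
  moreover have "finite (PiE Y (\<lambda>_. {..i}))" by (rule finite_PiE) (simp_all add: assms)
  ultimately have "finite (?phi ` Ms Y i)" by (rule finite_subset)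
  then show ?thesis using finite_imageD[OF _ inj] by blast
qed

lemma Ms_0: "finite Y \<Longrightarrow> Ms Y 0 = {0}"
proof (rule set_eqI, rule iffI)
  fix m assume fin: "finite Y" and m: "m \<in> Ms Y 0"
  show "m \<in> {0}"
  proof -
    have "m = 0"
    proof (rule poly_mapping_eqI)
      fix v show "Poly_Mapping.lookup m v = Poly_Mapping.lookup 0 v"
      proof (cases "v \<in> Y")
        case True then show ?thesis using m fin by (auto simp: Ms_def)
      next
        case False
        then have "v \<notin> Poly_Mapping.keys m" using m by (auto simp: Ms_def)
        then show ?thesis by (simp add: in_keys_iff)
      qed
    qed
    then show ?thesis by simp
  qed
next
  fix m assume "m \<in> {0::nat \<Rightarrow>\<^sub>0 nat}" then show "m \<in> Ms Y 0" by (simp add: Ms_def)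
qed

lemma hs_0: "finite Y \<Longrightarrow> hs z Y 0 = 1"
  by (simp add: hs_def Ms_0)

lemma hs_empty: "hs z {} (Suc i) = 0"
proof -
  have "Ms {} (Suc i) = {}" by (auto simp: Ms_def)
  then show ?thesis by (simp add: hs_def)
qed

lemma hs_single: "hs z {v} i = z v ^ i"
proof -
  have "Ms {v} i = {Poly_Mapping.single v i}"
  proof (rule set_eqI, rule iffI)
    fix m assume m: "m \<in> Ms {v} i"
    have "m = Poly_Mapping.single v i"
    proof (rule poly_mapping_eqI)
      fix w show "Poly_Mapping.lookup m w = Poly_Mapping.lookup (Poly_Mapping.single v i) w"
      proof (cases "w = v")
        case True then show ?thesis using m by (simp add: Ms_def)
      next
        case False
        then have "w \<notin> Poly_Mapping.keys m" using m by (auto simp: Ms_def)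
        then show ?thesis using False by (simp add: in_keys_iff lookup_single)
      qed
    qed
    then show "m \<in> {Poly_Mapping.single v i}" by simp
  next
    fix m assume "m \<in> {Poly_Mapping.single v i}"
    then show "m \<in> Ms {v} i" by (simp add: Ms_def)
  qed
  then show ?thesis by (simp add: hs_def)
qed

lemma hs_insert:
  assumes fin: "finite Y" and y: "y \<notin> Y"
  shows "hs z (insert y Y) (Suc s) = hs z Y (Suc s) + z y * hs z (insert y Y) s"
proof -
  let ?W = "insert y Y"
  let ?sh = "\<lambda>m. m + Poly_Mapping.single y (1::nat)"
  have finW: "finite ?W" using fin by simp
  have sumW: "sum (Poly_Mapping.lookup m) ?W = Poly_Mapping.lookup m y + sum (Poly_Mapping.lookup m) Y" for m
    using fin y by simp
  have A: "{m \<in> Ms ?W (Suc s). Poly_Mapping.lookup m y = 0} = Ms Y (Suc s)"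
  proof (rule set_eqI, rule iffI)
    fix m assume m: "m \<in> {m \<in> Ms ?W (Suc s). Poly_Mapping.lookup m y = 0}"
    then have "y \<notin> Poly_Mapping.keys m" by (simp add: in_keys_iff)
    then show "m \<in> Ms Y (Suc s)" using m sumW[of m] by (auto simp: Ms_def)
  next
    fix m assume m: "m \<in> Ms Y (Suc s)"
    then have "y \<notin> Poly_Mapping.keys m" using y by (auto simp: Ms_def)
    then have "Poly_Mapping.lookup m y = 0" by (simp add: in_keys_iff)
    then show "m \<in> {m \<in> Ms ?W (Suc s). Poly_Mapping.lookup m y = 0}"
      using m sumW[of m] by (auto simp: Ms_def)
  qed
  have sum_sh: "sum (Poly_Mapping.lookup (?sh m)) ?W = Suc (sum (Poly_Mapping.lookup m) ?W)" for m
    using finW by (simp add: lookup_add sum.distrib lookup_single when_def)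
  have B: "{m \<in> Ms ?W (Suc s). Poly_Mapping.lookup m y \<noteq> 0} = ?sh ` Ms ?W s"
  proof (rule set_eqI, rule iffI)
    fix m assume m: "m \<in> {m \<in> Ms ?W (Suc s). Poly_Mapping.lookup m y \<noteq> 0}"
    define m' where "m' = m - Poly_Mapping.single y 1"
    have lm': "Poly_Mapping.lookup m' v = Poly_Mapping.lookup m v - (1 when y = v)" for v
      by (simp add: m'_def lookup_minus lookup_single)
    have eq: "m = ?sh m'"
      by (rule poly_mapping_eqI) (use m in \<open>auto simp: lookup_add lm' lookup_single when_def\<close>)
    have "Poly_Mapping.keys m' \<subseteq> Poly_Mapping.keys m"
      by (auto simp: in_keys_iff lm' when_def)
    moreover have "sum (Poly_Mapping.lookup m') ?W = s"
      using sum_sh[of m'] eq m by (auto simp: Ms_def)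
    ultimately have "m' \<in> Ms ?W s" using m by (auto simp: Ms_def)
    then show "m \<in> ?sh ` Ms ?W s" using eq by blast
  next
    fix m assume "m \<in> ?sh ` Ms ?W s"
    then obtain m' where m': "m' \<in> Ms ?W s" and eq: "m = ?sh m'" by auto
    have "Poly_Mapping.keys m \<subseteq> ?W"
      using eq keys_add[of m' "Poly_Mapping.single y 1"] m' by (auto simp: Ms_def)
    moreover have "Poly_Mapping.lookup m y \<noteq> 0" using eq by (simp add: lookup_add)
    ultimately show "m \<in> {m \<in> Ms ?W (Suc s). Poly_Mapping.lookup m y \<noteq> 0}"
      using sum_sh[of m'] eq m' by (auto simp: Ms_def)
  qed
  have inj: "inj_on ?sh (Ms ?W s)" by (rule inj_onI) simp
  have "hs z ?W (Suc s) = (\<Sum>m\<in>{m \<in> Ms ?W (Suc s). Poly_Mapping.lookup m y = 0}. mon z m)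
      + (\<Sum>m\<in>{m \<in> Ms ?W (Suc s). Poly_Mapping.lookup m y \<noteq> 0}. mon z m)"
  proof -
    have "Ms ?W (Suc s) = {m \<in> Ms ?W (Suc s). Poly_Mapping.lookup m y = 0} \<union> {m \<in> Ms ?W (Suc s). Poly_Mapping.lookup m y \<noteq> 0}"
      by blast
    then show ?thesis unfolding hs_def
      by (metis (no_types, lifting) sum.union_disjoint Ms_finite finW finite_Un disjoint_iff mem_Collect_eq)
  qed
  also have "\<dots> = hs z Y (Suc s) + (\<Sum>m\<in>?sh ` Ms ?W s. mon z m)"
    by (simp only: A B hs_def)
  also have "(\<Sum>m\<in>?sh ` Ms ?W s. mon z m) = (\<Sum>m\<in>Ms ?W s. mon z (?sh m))"
    by (rule sum.reindex[OF inj, unfolded comp_def])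
  also have "\<dots> = z y * hs z ?W s"
    by (simp add: hs_def mon_add sum_distrib_left mult.commute)
  finally show ?thesis .
qed



definition Fe :: "(nat \<Rightarrow> rat) \<Rightarrow> nat set \<Rightarrow> rat fps" where
  "Fe z T = Abs_fps (es z T)"

definition Fh :: "(nat \<Rightarrow> rat) \<Rightarrow> nat set \<Rightarrow> rat fps" where
  "Fh z Y = Abs_fps (\<lambda>i. (-1)^i * hs z Y i)"

lemma Fe_insert:
  assumes "finite T" "t \<notin> T"
  shows "Fe z (insert t T) = Fe z T * (1 + fps_const (z t) * fps_X)"
proof (rule fps_ext)
  fix n
  show "fps_nth (Fe z (insert t T)) n = fps_nth (Fe z T * (1 + fps_const (z t) * fps_X)) n"
  proof (cases n)
    case 0 then show ?thesis using assms by (simp add: Fe_def es_0)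
  next
    case (Suc s)
    have "fps_nth (Fe z T * (1 + fps_const (z t) * fps_X)) n = fps_nth (Fe z T) n + z t * fps_nth (Fe z T) s"
      by (simp add: distrib_left Suc mult.assoc[symmetric] mult.commute[of _ "fps_const (z t)"])
    then show ?thesis using es_insert[OF assms, of z s] Suc by (simp add: Fe_def)
  qed
qed

lemma Fh_insert:
  assumes "finite Y" "y \<notin> Y"
  shows "Fh z (insert y Y) * (1 + fps_const (z y) * fps_X) = Fh z Y"
proof (rule fps_ext)
  fix n
  show "fps_nth (Fh z (insert y Y) * (1 + fps_const (z y) * fps_X)) n = fps_nth (Fh z Y) n"
  proof (cases n)
    case 0 then show ?thesis using assms by (simp add: Fh_def hs_0)
  next
    case (Suc s)
    have "fps_nth (Fh z (insert y Y) * (1 + fps_const (z y) * fps_X)) n = fps_nth (Fh z (insert y Y)) n + z y * fps_nth (Fh z (insert y Y)) s"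
      by (simp add: distrib_left Suc mult.assoc[symmetric] mult.commute[of _ "fps_const (z y)"])
    also have "\<dots> = (-1)^n * hs z Y n"
      using hs_insert[OF assms, of z s] Suc by (simp add: Fh_def algebra_simps)
    finally show ?thesis by (simp add: Fh_def)
  qed
qed

lemma Fh_empty: "Fh z {} = 1"
proof (rule fps_ext)
  fix n show "fps_nth (Fh z {}) n = fps_nth 1 n"
    by (cases n) (simp_all add: Fh_def hs_0 hs_empty)
qed

lemma Fh_Fe:
  assumes "finite Y"
  shows "finite T \<Longrightarrow> inj_on f Y \<Longrightarrow> f ` Y \<subseteq> T \<Longrightarrow> (\<forall>y\<in>Y. z (f y) = z y) \<Longrightarrow>
     Fh z Y * Fe z T = Fe z (T - f ` Y)"
  using assms
proof (induction Y arbitrary: T rule: finite_induct)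
  case empty then show ?case by (simp add: Fh_empty)
next
  case (insert y Y)
  let ?t = "f y"
  let ?T' = "T - {?t}"
  have tT: "?t \<in> T" using insert by auto
  have T: "T = insert ?t ?T'" using tT by auto
  have fT': "finite ?T'" using insert by auto
  have sub: "f ` Y \<subseteq> ?T'" using insert by (auto simp: inj_on_def)
  have c: "z ?t = z y" using insert by auto
  have "Fh z (insert y Y) * Fe z T = Fh z (insert y Y) * (Fe z ?T' * (1 + fps_const (z y) * fps_X))"
    using Fe_insert[OF fT', of ?t z] T c by simp
  also have "\<dots> = (Fh z (insert y Y) * (1 + fps_const (z y) * fps_X)) * Fe z ?T'"
    by (simp add: mult_ac)
  also have "\<dots> = Fh z Y * Fe z ?T'"
    using Fh_insert[OF insert(1,2)] by simp
  also have "\<dots> = Fe z (?T' - f ` Y)"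
    using insert.IH[OF fT' _ sub] insert.prems by (auto simp: inj_on_insert)
  also have "?T' - f ` Y = T - f ` insert y Y" by auto
  finally show ?case .
qed

lemma key:
  assumes "finite Y" "finite T" "inj_on f Y" "f ` Y \<subseteq> T" "\<forall>y\<in>Y. z (f y) = z y"
    and "card T < r + card Y"
  shows "(\<Sum>i=0..r. (-1)^i * es z T (r - i) * hs z Y i) = 0"
proof -
  have "(\<Sum>i=0..r. (-1)^i * es z T (r - i) * hs z Y i) = fps_nth (Fh z Y * Fe z T) r"
    by (simp only: fps_mult_nth Fh_def Fe_def fps_nth_Abs_fps) (simp add: mult_ac)
  also have "\<dots> = es z (T - f ` Y) r"
    using Fh_Fe[OF assms(1-5)] by (simp add: Fe_def)
  also have "\<dots> = 0"
  proof (rule es_gt)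
    show "finite (T - f ` Y)" using assms by simp
    have "card (T - f ` Y) = card T - card Y"
      using assms by (simp add: card_Diff_subset card_image finite_subset)
    moreover have "card Y \<le> card T" using card_inj_on_le[OF assms(3,4,2)] .
    then have "card T - card Y < r" using assms(6) by arith
    ultimately show "card (T - f ` Y) < r" by (simp only:)
  qed
  finally show ?thesis .
qed



lemma vanishing_is_ideal: "is_ideal_in (mpoly_ring N) (vanishing_ideal N Z)"
  unfolding is_ideal_in_def vanishing_ideal_def
  by (auto intro: ring_zero ring_add ring_mult simp: eval_add eval_mult)

lemma esym_ring: "V \<subseteq> {..<N} \<Longrightarrow> esym r V \<in> mpoly_ring N"
  unfolding esym_def by (intro ring_sum ring_prod ring_var) auto

lemma hsym_ring: "V \<subseteq> {..<N} \<Longrightarrow> hsym r V \<in> mpoly_ring N"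
  unfolding hsym_def by (intro ring_sum ring_single) auto

lemma sign_flip: "j \<le> d \<Longrightarrow> (-1::rat)^d * (-1)^(d-j) = (-1)^j"
proof -
  assume "j \<le> d"
  then have "(-1::rat)^d = (-1)^(d-j) * (-1)^j" by (simp flip: power_add)
  then have "(-1::rat)^d * (-1)^(d-j) = ((-1)^(d-j) * (-1)^(d-j)) * (-1)^j" by (simp add: mult_ac)
  also have "(-1::rat)^(d-j) * (-1)^(d-j) = 1" by (simp flip: power_add add: power_mult_distrib[symmetric])
  finally show ?thesis by simp
qed

lemma gens_vanish:
  assumes "0 < d" "d \<le> k" "k \<le> n"
  shows "Jgens n k d \<subseteq> vanishing_ideal (n+d+k) (Zset n k d)"
proof
  let ?N = "n+d+k"
  let ?yv = "yvars n d" and ?tv = "tvars n d k" and ?xv = "xvars n"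
  have yvN: "?yv \<subseteq> {..<?N}" and tvN: "?tv \<subseteq> {..<?N}" and xvN: "?xv \<subseteq> {..<?N}"
    by (auto simp: yvars_def tvars_def xvars_def)
  have cy: "card ?yv = d" and ct: "card ?tv = k" and cx: "card ?xv = n"
    by (simp_all add: yvars_def tvars_def xvars_def)
  have fy: "finite ?yv" and ft: "finite ?tv" and fx: "finite ?xv"
    by (simp_all add: yvars_def tvars_def xvars_def)
  fix p assume p: "p \<in> Jgens n k d"
  show "p \<in> vanishing_ideal ?N (Zset n k d)"
    using p unfolding Jgens_def
  proof (elim UnE CollectE exE conjE)
    fix r assume pr: "p = (\<Sum>i=0..r. (-1)^i * esym (r - i) ?tv * hsym i ?yv)" and r: "r > k - d"
    have "p \<in> mpoly_ring ?N" unfolding pr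
      by (intro ring_sum ring_mult ring_neg1_pow esym_ring hsym_ring tvN yvN)
    moreover have "mpoly_eval z p = 0" if z: "z \<in> Zset n k d" for z
    proof -
      obtain f where f1: "\<forall>i\<in>{n+1..n+d}. f i \<in> {n+d+1..n+d+k}" and f2: "inj_on f {n+1..n+d}"
        and f3: "\<forall>i\<in>{n+1..n+d}. z (i - 1) = z (f i - 1)"
        using z unfolding Zset_def by blast
      define F where "F v = f (v+1) - 1" for v
      have Fin: "inj_on F ?yv"
      proof (rule inj_onI)
        fix v v' assume v: "v \<in> ?yv" and v': "v' \<in> ?yv" and e: "F v = F v'"
        have "v+1 \<in> {n+1..n+d}" "v'+1 \<in> {n+1..n+d}" using v v' by (auto simp: yvars_def)
        then have "f (v+1) \<in> {n+d+1..n+d+k}" "f (v'+1) \<in> {n+d+1..n+d+k}" using f1 by blast+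
        then have "f (v+1) \<ge> 1" "f (v'+1) \<ge> 1" by auto
        then have "f (v+1) = f (v'+1)" using e unfolding F_def by simp
        moreover have "v+1 \<in> {n+1..n+d}" "v'+1 \<in> {n+1..n+d}" using v v' by (auto simp: yvars_def)
        ultimately have "v+1 = v'+1" using f2 unfolding inj_on_def by blast
        then show "v = v'" by simp
      qed
      have Fsub: "F ` ?yv \<subseteq> ?tv"
      proof
        fix w assume "w \<in> F ` ?yv"
        then obtain v where v: "v \<in> ?yv" "w = F v" by auto
        then have "v+1 \<in> {n+1..n+d}" by (auto simp: yvars_def)
        then have "f (v+1) \<in> {n+d+1..n+d+k}" using f1 by blast
        then show "w \<in> ?tv" using v by (auto simp: F_def tvars_def)
      qed
      have Fz: "\<forall>v\<in>?yv. z (F v) = z v"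
      proof
        fix v assume v: "v \<in> ?yv"
        then have "v+1 \<in> {n+1..n+d}" by (auto simp: yvars_def)
        then have "z ((v+1) - 1) = z (f (v+1) - 1)" using f3 by blast
        then show "z (F v) = z v" by (simp add: F_def)
      qed
      have "mpoly_eval z p = (\<Sum>i=0..r. (-1)^i * es z ?tv (r - i) * hs z ?yv i)"
        unfolding pr by (simp add: eval_sum eval_mult eval_neg1_pow eval_esym eval_hsym)
      also have "\<dots> = 0"
        by (rule key[OF fy ft Fin Fsub Fz]) (use r assms ct cy in arith)
      finally show ?thesis .
    qed
    ultimately show ?thesis unfolding vanishing_ideal_def by blast
  next
    fix r assume pr: "p = (\<Sum>i=0..r. (-1)^i * esym (r - i) ?xv * hsym i ?yv)" and r: "r > n - d"
    have "p \<in> mpoly_ring ?N" unfolding pr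
      by (intro ring_sum ring_mult ring_neg1_pow esym_ring hsym_ring xvN yvN)
    moreover have "mpoly_eval z p = 0" if z: "z \<in> Zset n k d" for z
    proof -
      obtain g where g1: "\<forall>j\<in>{1..n}. g j \<in> {n+1..n+d}" and g2: "g ` {1..n} = {n+1..n+d}"
        and g3: "\<forall>j\<in>{1..n}. z (j - 1) = z (g j - 1)"
        using z unfolding Zset_def by blast
      define J where "J v = (SOME j. j \<in> {1..n} \<and> g j = v + 1)" for v
      have J: "J v \<in> {1..n} \<and> g (J v) = v + 1" if "v \<in> ?yv" for v
      proof -
        have "v + 1 \<in> g ` {1..n}" using that g2 by (auto simp: yvars_def)
        then have "\<exists>j. j \<in> {1..n} \<and> g j = v + 1" by auto
        then show ?thesis unfolding J_def by (rule someI_ex)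
      qed
      define G where "G v = J v - 1" for v
      have Gin: "inj_on G ?yv"
      proof (rule inj_onI)
        fix v v' assume v: "v \<in> ?yv" and v': "v' \<in> ?yv" and e: "G v = G v'"
        have a: "J v \<in> {1..n}" "g (J v) = v + 1" using J[OF v] by blast+
        have b: "J v' \<in> {1..n}" "g (J v') = v' + 1" using J[OF v'] by blast+
        have "J v = J v'" using e a(1) b(1) unfolding G_def by auto
        then have "v + 1 = v' + 1" using a(2) b(2) by metis
        then show "v = v'" by simp
      qed
      have Gsub: "G ` ?yv \<subseteq> ?xv"
      proof
        fix w assume "w \<in> G ` ?yv"
        then obtain v where v: "v \<in> ?yv" "w = G v" by auto
        have "J v \<in> {1..n}" using J[OF v(1)] by blast
        then show "w \<in> ?xv" using v(2) by (auto simp: G_def xvars_def)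
      qed
      have Gz: "\<forall>v\<in>?yv. z (G v) = z v"
      proof
        fix v assume v: "v \<in> ?yv"
        then have "z (J v - 1) = z (g (J v) - 1)" using g3 J[OF v] by blast
        then show "z (G v) = z v" using J[OF v] by (simp add: G_def)
      qed
      have "mpoly_eval z p = (\<Sum>i=0..r. (-1)^i * es z ?xv (r - i) * hs z ?yv i)"
        unfolding pr by (simp add: eval_sum eval_mult eval_neg1_pow eval_esym eval_hsym)
      also have "\<dots> = 0"
        by (rule key[OF fy fx Gin Gsub Gz]) (use r assms cx cy in arith)
      finally show ?thesis .
    qed
    ultimately show ?thesis unfolding vanishing_ideal_def by blast
  next
    fix i assume pr: "p = (\<Sum>j=0..d. (-1)^j * mpoly_var (i - 1) ^ (d - j) * esym j ?yv)"
      and i: "i \<in> {1..n}"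
    have "p \<in> mpoly_ring ?N" unfolding pr
      by (intro ring_sum ring_mult ring_neg1_pow esym_ring ring_power ring_var yvN) (use i in auto)
    moreover have "mpoly_eval z p = 0" if z: "z \<in> Zset n k d" for z
    proof -
      obtain g where g1: "\<forall>j\<in>{1..n}. g j \<in> {n+1..n+d}"
        and g3: "\<forall>j\<in>{1..n}. z (j - 1) = z (g j - 1)"
        using z unfolding Zset_def by blast
      let ?x = "z (i - 1)"
      define F where "F v = g i - 1" for v :: nat
      have Fin: "inj_on F {i - 1}" by simp
      have "g i \<in> {n+1..n+d}" using g1 i by blast
      then have Fsub: "F ` {i - 1} \<subseteq> ?yv" by (auto simp: F_def yvars_def)
      have Fz: "\<forall>v\<in>{i - 1}. z (F v) = z v" using g3 i by (simp add: F_def)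
      have k0: "(\<Sum>l=0..d. (-1)^l * es z ?yv (d - l) * hs z {i - 1} l) = 0"
        by (rule key[OF _ fy Fin Fsub Fz]) (simp_all add: cy)
      have "mpoly_eval z p = (\<Sum>j=0..d. (-1)^j * ?x ^ (d - j) * es z ?yv j)"
        unfolding pr by (simp add: eval_sum eval_mult eval_neg1_pow eval_esym eval_power eval_uminus)
      also have "\<dots> = (\<Sum>j=0..d. (-1)^d * ((-1)^(d-j) * es z ?yv (d - (d - j)) * ?x ^ (d - j)))"
      proof (rule sum.cong[OF refl])
        fix j assume "j \<in> {0..d}"
        then have jd: "j \<le> d" by simp
        then have e1: "d - (d - j) = j" by simp
        have "(-1)^d * ((-1)^(d-j) * es z ?yv (d - (d - j)) * ?x ^ (d - j))
            = ((-1::rat)^d * (-1)^(d-j)) * (es z ?yv j * ?x ^ (d - j))"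
          unfolding e1 by (simp only: mult.assoc)
        also have "\<dots> = (-1)^j * (es z ?yv j * ?x ^ (d - j))" by (simp only: sign_flip[OF jd])
        finally show "(-1)^j * ?x ^ (d - j) * es z ?yv j
            = (-1)^d * ((-1)^(d-j) * es z ?yv (d - (d - j)) * ?x ^ (d - j))"
          by (simp only: mult_ac)
      qed
      also have "\<dots> = (-1)^d * (\<Sum>j=0..d. (-1)^(d-j) * es z ?yv (d - (d - j)) * ?x ^ (d - j))"
        by (simp add: sum_distrib_left)
      also have "(\<Sum>j=0..d. (-1)^(d-j) * es z ?yv (d - (d - j)) * ?x ^ (d - j))
          = (\<Sum>l=0..d. (-1)^l * es z ?yv (d - l) * ?x ^ l)"
        using sum.atLeastAtMost_rev[of "\<lambda>l. (-1)^l * es z ?yv (d - l) * ?x ^ l" 0 d] by simp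
      also have "\<dots> = 0" using k0 by (simp add: hs_single)
      finally show ?thesis by simp
    qed
    ultimately show ?thesis unfolding vanishing_ideal_def by blast
  qed
qed

theorem lemma3p15:
  fixes n k d :: nat
  assumes "0 < d" and "d \<le> k" and "k \<le> n"
  shows "Jideal n k d \<subseteq> vanishing_ideal (n+d+k) (Zset n k d)"
  unfolding Jideal_def ideal_gen_in_def
  by (rule Inter_lower) (use vanishing_is_ideal gens_vanish[OF assms] in blast)


end
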